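(* Let $V,W$ be complex vector spaces, let $M=(M_1,\dots,M_s)\in\mathrm{Hom}(V,W)^s$, and suppose $\mathrm{rk}(M)\geq r$ for some $r\in\mathbb{Z}_{\geq 0}$. Then there is a finite-dimensional subspace $U\subseteq V$ such that the restricted tuple $(M_1|_U,\dots,M_s|_U)\in\mathrm{Hom}(U,W)^s$ has rank at least $r$.
   Context: Rank of a tuple: for vector spaces $V,W$ and $M=(M_1,\dots,M_s)\in\mathrm{Hom}(V,W)^s$, $\mathrm{rk}(M)$ is the infimum of $\mathrm{rk}(\sum_i\lambda_iM_i)\in\mathbb{Z}_{\ge0}\cup\{\infty\}$ over all nonzero $(\lambda_1,\dots,\lambda_s)\in\mathbb{C}^s$ (so $\mathrm{rk}(M)=\infty$ if $s=0$). *)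

theory Defs
  imports Complex_Main "HOL-Library.Extended_Nat"
begin

text \<open>Complex vector spaces are modelled by the locale vector_space of HOL
  with a scalar multiplication of type complex => 'v => 'v.\<close>

text \<open>Dimension (in N \<union> {\<infinity>}) of the span of a set X of vectors:
  the supremum of the sizes of finite linearly independent subsets of X.\<close>
definition vs_dim :: "(complex \<Rightarrow> 'w::ab_group_add \<Rightarrow> 'w) \<Rightarrow> 'w set \<Rightarrow> enat" where
  "vs_dim scaleW X =
     Sup {enat (card B) | B. finite B \<and> B \<subseteq> X \<and> \<not> module.dependent scaleW B}"

definition map_rank :: "(complex \<Rightarrow> 'w::ab_group_add \<Rightarrow> 'w) \<Rightarrow> ('v \<Rightarrow> 'w) \<Rightarrow> 'v set \<Rightarrow> enat" where
  "map_rank scaleW f S = vs_dim scaleW (f ` S)"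

text \<open>Rank of the tuple (M 0, ..., M (s-1)) restricted to S: infimum of the ranks
  of all nontrivial linear combinations; equals \<infinity> when s = 0.\<close>
definition tuple_rank ::
  "(complex \<Rightarrow> 'w::ab_group_add \<Rightarrow> 'w) \<Rightarrow> nat \<Rightarrow> (nat \<Rightarrow> 'v \<Rightarrow> 'w) \<Rightarrow> 'v set \<Rightarrow> enat"
  where
  "tuple_rank scaleW s M S =
     (INF c \<in> {c :: nat \<Rightarrow> complex. \<exists>i<s. c i \<noteq> 0}.
        map_rank scaleW (\<lambda>x. \<Sum>i<s. scaleW (c i) (M i x)) S)"

end

theory Submission imports Defs "HOL-Analysis.Analysis" begin

definition LI :: "(complex \<Rightarrow> 'w::ab_group_add \<Rightarrow> 'w) \<Rightarrow> nat \<Rightarrow> (nat \<Rightarrow> 'w) \<Rightarrow> bool" where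
  "LI sc r v \<longleftrightarrow> (\<forall>x. (\<Sum>j<r. sc (x j) (v j)) = 0 \<longrightarrow> (\<forall>j<r. x j = 0))"

lemma LI_props:
  assumes vs: "vector_space sc" and li: "LI sc r v"
  shows "inj_on v {..<r}" "\<not> module.dependent sc (v ` {..<r})"
proof -
  interpret W: vector_space sc by fact
  show inj: "inj_on v {..<r}"
  proof (rule inj_onI, rule ccontr)
    fix a b assume ab: "a \<in> {..<r}" "b \<in> {..<r}" "v a = v b" "a \<noteq> b"
    define x where "x = (\<lambda>j. if j = a then 1 else if j = b then -1 else (0::complex))"
    have "(\<Sum>j<r. sc (x j) (v j)) = (\<Sum>j\<in>{a,b}. sc (x j) (v j))"
      by (rule sum.mono_neutral_right) (use ab in \<open>auto simp: x_def\<close>)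
    also have "\<dots> = sc 1 (v a) + sc (-1) (v b)" using ab by (simp add: x_def)
    also have "\<dots> = 0" using ab by (simp add: W.scale_minus_left)
    finally have "x a = 0" using li ab unfolding LI_def by blast
    then show False by (simp add: x_def)
  qed
  show "\<not> W.dependent (v ` {..<r})"
  proof
    assume "W.dependent (v ` {..<r})"
    then obtain u where u: "\<exists>b\<in>v ` {..<r}. u b \<noteq> 0" "(\<Sum>b\<in>v ` {..<r}. sc (u b) b) = 0"
      by (auto simp: W.dependent_finite)
    have "(\<Sum>j<r. sc (u (v j)) (v j)) = 0"
      using u(2) by (simp add: sum.reindex[OF inj])
    then have "\<forall>j<r. u (v j) = 0" using li[unfolded LI_def, THEN spec, of "\<lambda>j. u (v j)"] by simp
    with u(1) show False by auto
  qed
qed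

lemma LI_rank:
  assumes vs: "vector_space sc" and S: "\<forall>j<r. u j \<in> S" and li: "LI sc r (\<lambda>j. g (u j))"
  shows "enat r \<le> vs_dim sc (g ` S)"
proof -
  interpret W: vector_space sc by fact
  note P = LI_props[OF vs li]
  have "card ((\<lambda>j. g (u j)) ` {..<r}) = r" using P(1) by (simp add: card_image)
  moreover have "(\<lambda>j. g (u j)) ` {..<r} \<subseteq> g ` S" using S by auto
  ultimately have "enat r \<in> {enat (card B) | B. finite B \<and> B \<subseteq> g ` S \<and> \<not> W.dependent B}"
    using P(2) by (metis (mono_tags, lifting) finite_imageI finite_lessThan mem_Collect_eq)
  then show ?thesis unfolding vs_dim_def by (rule Sup_upper)
qed

lemma rank_LI:
  assumes vs: "vector_space sc" and rk: "enat r \<le> vs_dim sc (g ` S)"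
  shows "\<exists>u. (\<forall>j<r. u j \<in> S) \<and> LI sc r (\<lambda>j. g (u j))"
proof (cases "r = 0")
  case True then show ?thesis by (auto simp: LI_def)
next
  case False
  interpret W: vector_space sc by fact
  have "enat (r - 1) < enat r" using False by simp
  then have "enat (r - 1) < vs_dim sc (g ` S)" using rk by (rule less_le_trans)
  then have "\<exists>a\<in>{enat (card B) | B. finite B \<and> B \<subseteq> g ` S \<and> \<not> W.dependent B}. enat (r - 1) < a"
    unfolding vs_dim_def less_Sup_iff .
  then obtain B where B: "finite B" "B \<subseteq> g ` S" "\<not> W.dependent B" "enat (r - 1) < enat (card B)"
    by blast
  then have "r \<le> card B" using False by simp
  then obtain B' where B': "B' \<subseteq> B" "card B' = r" "finite B'" by (rule obtain_subset_with_card_n)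
  have indB': "\<not> W.dependent B'" using B(3) B'(1) W.dependent_mono by blast
  obtain e where e: "bij_betw e {0..<card B'} B'" using ex_bij_betw_nat_finite[OF B'(3)] by blast
  then have e': "bij_betw e {..<r} B'" using B'(2) by (simp add: lessThan_atLeast0)
  have inje: "inj_on e {..<r}" and ime: "e ` {..<r} = B'" using e' by (auto simp: bij_betw_def)
  define u where "u j = inv_into S g (e j)" for j
  have eS: "e j \<in> g ` S" if "j < r" for j using that ime B'(1) B(2) by auto
  have gu: "g (u j) = e j" if "j < r" for j using eS[OF that] by (simp add: u_def f_inv_into_f)
  have uS: "\<forall>j<r. u j \<in> S" using eS by (simp add: u_def inv_into_into)
  have "LI sc r (\<lambda>j. g (u j))"
    unfolding LI_def
  proof (intro allI impI)
    fix x j assume x: "(\<Sum>j<r. sc (x j) (g (u j))) = 0" and j: "j < r"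
    define u' where "u' b = x (the_inv_into {..<r} e b)" for b
    have "(\<Sum>b\<in>B'. sc (u' b) b) = (\<Sum>j<r. sc (u' (e j)) (e j))"
      unfolding ime[symmetric] by (simp add: sum.reindex[OF inje])
    also have "\<dots> = (\<Sum>j<r. sc (x j) (g (u j)))"
      by (rule sum.cong) (auto simp: u'_def the_inv_into_f_f[OF inje] gu)
    finally have "(\<Sum>b\<in>B'. sc (u' b) b) = 0" using x by simp
    then have "\<forall>b\<in>B'. u' b = 0" using indB' B'(3) by (auto simp: W.dependent_finite)
    then have "u' (e j) = 0" using ime j by auto
    then show "x j = 0" using j by (simp add: u'_def the_inv_into_f_f[OF inje])
  qed
  with uS show ?thesis by blast
qed

lemma LI_scale:
  assumes vs: "vector_space sc" and m: "m \<noteq> 0" and li: "LI sc r v"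
  shows "LI sc r (\<lambda>j. sc m (v j))"
proof -
  interpret W: vector_space sc by fact
  show ?thesis unfolding LI_def
  proof (intro allI impI)
    fix x j assume x: "(\<Sum>j<r. sc (x j) (sc m (v j))) = 0" and j: "j < r"
    have "(\<Sum>j<r. sc (x j * m) (v j)) = 0" using x by (simp add: W.scale_scale)
    then have "x j * m = 0" using li[unfolded LI_def, THEN spec, of "\<lambda>j. x j * m"] j by simp
    then show "x j = 0" using m by simp
  qed
qed


lemma vs_complex: "vector_space ((*) :: complex \<Rightarrow> complex \<Rightarrow> complex)"
  by unfold_locales (auto simp: algebra_simps)

lemma LI_perturb:
  assumes vs: "vector_space sc" and li: "LI sc r v"
  shows "\<exists>\<delta>>0. \<forall>d. (\<forall>i<s. cmod (d i) < \<delta>) \<longrightarrow> LI sc r (\<lambda>j. v j + (\<Sum>i<s. sc (d i) (w i j)))"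
proof -
  interpret W: vector_space sc by fact
  interpret P: vector_space_pair sc "(*) :: complex \<Rightarrow> _"
    by (intro vector_space_pair.intro vs vs_complex)
  note LP = LI_props[OF vs li]
  define B where "B = v ` {..<r}"
  define \<phi> where "\<phi> k = P.construct B (\<lambda>y. if y = v k then 1 else 0)" for k
  have lin\<phi>: "Vector_Spaces.linear sc (*) (\<phi> k)" for k
    unfolding \<phi>_def by (rule P.linear_construct) (use LP(2) in \<open>simp add: B_def\<close>)
  have \<phi>v: "\<phi> k (v j) = (if j = k then 1 else 0)" if "j < r" "k < r" for j k
  proof -
    have "\<phi> k (v j) = (if v j = v k then 1 else 0)"
      unfolding \<phi>_def by (rule P.construct_basis) (use LP(2) that in \<open>auto simp: B_def\<close>)
    also have "(v j = v k) = (j = k)" using LP(1) that by (auto dest: inj_onD)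
    finally show ?thesis .
  qed
  define T where "T = (\<Sum>k<r. \<Sum>j<r. \<Sum>i<s. cmod (\<phi> k (w i j)))"
  have T0: "T \<ge> 0" by (simp add: T_def sum_nonneg)
  define \<delta> where "\<delta> = 1 / (T + 1)"
  have \<delta>pos: "\<delta> > 0" using T0 by (simp add: \<delta>_def)
  have \<delta>T: "\<delta> * T < 1" using T0 by (simp add: \<delta>_def)
  show ?thesis
  proof (intro exI[of _ \<delta>] conjI allI impI \<delta>pos)
    fix d assume d: "\<forall>i<s. cmod (d i) < \<delta>"
    show "LI sc r (\<lambda>j. v j + (\<Sum>i<s. sc (d i) (w i j)))" unfolding LI_def
    proof (rule allI, rule impI)
      fix x assume x: "(\<Sum>j<r. sc (x j) (v j + (\<Sum>i<s. sc (d i) (w i j)))) = 0"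
      have eqk: "x k + (\<Sum>j<r. \<Sum>i<s. x j * (d i * \<phi> k (w i j))) = 0" if k: "k < r" for k
      proof -
        interpret L: Vector_Spaces.linear sc "(*)" "\<phi> k" by (rule lin\<phi>)
        have "\<phi> k (\<Sum>j<r. sc (x j) (v j + (\<Sum>i<s. sc (d i) (w i j)))) = 0"
          using x by (simp add: L.zero)
        moreover have "\<phi> k (\<Sum>j<r. sc (x j) (v j + (\<Sum>i<s. sc (d i) (w i j))))
            = (\<Sum>j<r. x j * (\<phi> k (v j) + (\<Sum>i<s. d i * \<phi> k (w i j))))"
          by (simp add: L.sum L.scale L.add)
        moreover have "(\<Sum>j<r. x j * (\<phi> k (v j) + (\<Sum>i<s. d i * \<phi> k (w i j))))
            = (\<Sum>j<r. x j * \<phi> k (v j)) + (\<Sum>j<r. \<Sum>i<s. x j * (d i * \<phi> k (w i j)))"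
          by (simp add: distrib_left sum.distrib sum_distrib_left)
        moreover have "(\<Sum>j<r. x j * \<phi> k (v j)) = (\<Sum>j<r. if j = k then x j else 0)"
          by (rule sum.cong) (use k in \<open>auto simp: \<phi>v\<close>)
        moreover have "(\<Sum>j<r. if j = k then x j else 0) = x k" using k by (simp add: sum.delta)
        ultimately show ?thesis by simp
      qed
      define S where "S = (\<Sum>k<r. cmod (x k))"
      have S0: "S \<ge> 0" by (simp add: S_def sum_nonneg)
      have xjS: "cmod (x j) \<le> S" if "j < r" for j
        unfolding S_def by (rule member_le_sum) (use that in auto)
      have xk: "cmod (x k) \<le> (\<Sum>j<r. \<Sum>i<s. S * \<delta> * cmod (\<phi> k (w i j)))" if "k < r" for k
      proof -
        have "x k = - (\<Sum>j<r. \<Sum>i<s. x j * (d i * \<phi> k (w i j)))"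
          by (subst eq_neg_iff_add_eq_0) (rule eqk[OF that])
        then have "cmod (x k) = cmod (\<Sum>j<r. \<Sum>i<s. x j * (d i * \<phi> k (w i j)))"
          by (simp only: norm_minus_cancel)
        also have "\<dots> \<le> (\<Sum>j<r. \<Sum>i<s. cmod (x j * (d i * \<phi> k (w i j))))"
          by (rule order_trans[OF norm_sum sum_mono[OF norm_sum]])
        also have "\<dots> \<le> (\<Sum>j<r. \<Sum>i<s. S * \<delta> * cmod (\<phi> k (w i j)))"
        proof (intro sum_mono)
          fix j i assume "j \<in> {..<r}" "i \<in> {..<s}"
          then have "cmod (x j) \<le> S" "cmod (d i) \<le> \<delta>" using xjS d by auto
          then have "cmod (x j) * cmod (d i) \<le> S * \<delta>" by (intro mult_mono) (auto simp: S0)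
          then have "cmod (x j) * cmod (d i) * cmod (\<phi> k (w i j)) \<le> S * \<delta> * cmod (\<phi> k (w i j))"
            by (rule mult_right_mono) simp
          then show "cmod (x j * (d i * \<phi> k (w i j))) \<le> S * \<delta> * cmod (\<phi> k (w i j))"
            by (simp add: norm_mult mult.assoc)
        qed
        finally show ?thesis .
      qed
      have "S \<le> (\<Sum>k<r. \<Sum>j<r. \<Sum>i<s. S * \<delta> * cmod (\<phi> k (w i j)))"
      proof -
        have "S = (\<Sum>k<r. cmod (x k))" by (simp add: S_def)
        also have "\<dots> \<le> (\<Sum>k<r. \<Sum>j<r. \<Sum>i<s. S * \<delta> * cmod (\<phi> k (w i j)))"
          by (rule sum_mono) (use xk in auto)
        finally show ?thesis .
      qed
      also have "\<dots> = S * \<delta> * T" by (simp add: T_def sum_distrib_left)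
      finally have SS: "S \<le> S * (\<delta> * T)" by (simp add: mult.assoc)
      have "S = 0"
      proof (rule ccontr)
        assume "S \<noteq> 0" then have "S > 0" using S0 by simp
        then have "S * (\<delta> * T) < S * 1" using \<delta>T by (intro mult_strict_left_mono) auto
        with SS show False by simp
      qed
      then have "\<forall>k\<in>{..<r}. cmod (x k) = 0" unfolding S_def
        by (subst (asm) sum_nonneg_eq_0_iff) auto
      then show "\<forall>j<r. x j = 0" by simp
    qed
  qed
qed


theorem lemma3p4:
  fixes scaleV :: "complex \<Rightarrow> 'v::ab_group_add \<Rightarrow> 'v"
    and scaleW :: "complex \<Rightarrow> 'w::ab_group_add \<Rightarrow> 'w"
    and s r :: nat
    and M :: "nat \<Rightarrow> 'v \<Rightarrow> 'w"
  assumes "vector_space scaleV"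
    and "vector_space scaleW"
    and "\<forall>i<s. Vector_Spaces.linear scaleV scaleW (M i)"
    and "tuple_rank scaleW s M UNIV \<ge> enat r"
  shows "\<exists>U. module.subspace scaleV U
             \<and> (\<exists>B. finite B \<and> module.span scaleV B = U)
             \<and> tuple_rank scaleW s M U \<ge> enat r"
proof -
  interpret V: vector_space scaleV by fact
  interpret W: vector_space scaleW by fact
  define f where "f = (\<lambda>(c::nat \<Rightarrow> complex) x. \<Sum>i<s. scaleW (c i) (M i x))"
  define Box :: "(nat \<Rightarrow> complex) set"
    where "Box = PiE UNIV (\<lambda>i::nat. if i < s then cball (0::complex) 1 else {0})"
  define K where "K = Box \<inter> {c. (\<Sum>i<s. cmod (c i)) = 1}"
  have cBox: "compact Box"
  proof -
    have "compactin (product_topology (\<lambda>_. euclidean) UNIV) Box"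
      unfolding Box_def by (subst compactin_PiE) auto
    then show ?thesis by (simp add: euclidean_product_topology)
  qed
  have "closed {c::nat\<Rightarrow>complex. (\<Sum>i<s. cmod (c i)) = 1}"
    by (intro closed_Collect_eq continuous_on_sum continuous_on_norm continuous_on_const) simp_all
  then have cK: "compact K" unfolding K_def using cBox by (rule compact_Int_closed[rotated])
  have loc: "\<forall>c0\<in>K. \<exists>F \<delta>. finite F \<and> \<delta> > 0 \<and> (\<forall>c. (\<forall>i\<in>{..<s}. c i \<in> ball (c0 i) \<delta>) \<longrightarrow>
      (\<exists>u. (\<forall>j<r. u j \<in> F) \<and> LI scaleW r (\<lambda>j. f c (u j))))"
  proof
    fix c0 assume "c0 \<in> K"
    then have "(\<Sum>i<s. cmod (c0 i)) = 1" by (simp add: K_def)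
    then have nz: "\<exists>i<s. c0 i \<noteq> 0"
    proof (rule contrapos_pp)
      assume "\<not> (\<exists>i<s. c0 i \<noteq> 0)"
      then have "\<forall>i<s. c0 i = 0" by auto
      then have "(\<Sum>i<s. cmod (c0 i)) = 0" by simp
      then show "(\<Sum>i<s. cmod (c0 i)) \<noteq> 1" by simp
    qed
    have "c0 \<in> {c. \<exists>i<s. c i \<noteq> 0}" using nz by simp
    with assms(4)[unfolded tuple_rank_def le_INF_iff]
    have "enat r \<le> map_rank scaleW (\<lambda>x. \<Sum>i<s. scaleW (c0 i) (M i x)) UNIV" by (rule bspec)
    then have "enat r \<le> map_rank scaleW (f c0) UNIV" by (simp add: f_def)
    then have "enat r \<le> vs_dim scaleW (f c0 ` UNIV)" by (simp add: map_rank_def)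
    from rank_LI[OF assms(2) this] obtain u where u: "LI scaleW r (\<lambda>j. f c0 (u j))" by auto
    from LI_perturb[OF assms(2) u, of s "\<lambda>i j. M i (u j)"] obtain \<delta> where
      \<delta>: "\<delta> > 0" and H: "\<forall>d. (\<forall>i<s. cmod (d i) < \<delta>) \<longrightarrow>
         LI scaleW r (\<lambda>j. f c0 (u j) + (\<Sum>i<s. scaleW (d i) (M i (u j))))" by blast
    have "\<forall>c. (\<forall>i\<in>{..<s}. c i \<in> ball (c0 i) \<delta>) \<longrightarrow>
      (\<exists>u'. (\<forall>j<r. u' j \<in> u ` {..<r}) \<and> LI scaleW r (\<lambda>j. f c (u' j)))"
    proof (rule allI, rule impI)
      fix c assume c: "\<forall>i\<in>{..<s}. c i \<in> ball (c0 i) \<delta>"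
      have "\<forall>i<s. cmod (c i - c0 i) < \<delta>" using c by (auto simp: dist_norm norm_minus_commute)
      with spec[OF H, of "\<lambda>i. c i - c0 i"]
      have L: "LI scaleW r (\<lambda>j. f c0 (u j) + (\<Sum>i<s. scaleW (c i - c0 i) (M i (u j))))"
        by (rule mp)
      have "f c0 (u j) + (\<Sum>i<s. scaleW (c i - c0 i) (M i (u j))) = f c (u j)" for j
        by (simp add: f_def W.scale_left_diff_distrib sum_subtractf)
      with L have "LI scaleW r (\<lambda>j. f c (u j))" by simp
      then show "\<exists>u'. (\<forall>j<r. u' j \<in> u ` {..<r}) \<and> LI scaleW r (\<lambda>j. f c (u' j))" by auto
    qed
    then show "\<exists>F \<delta>. finite F \<and> \<delta> > 0 \<and> (\<forall>c. (\<forall>i\<in>{..<s}. c i \<in> ball (c0 i) \<delta>) \<longrightarrow>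
      (\<exists>u. (\<forall>j<r. u j \<in> F) \<and> LI scaleW r (\<lambda>j. f c (u j))))"
      using \<delta> by (intro exI[of _ "u ` {..<r}"] exI[of _ \<delta>]) auto
  qed
  obtain FF where FF1: "\<forall>c0\<in>K. \<exists>\<delta>. finite (FF c0) \<and> \<delta> > 0 \<and> (\<forall>c. (\<forall>i\<in>{..<s}. c i \<in> ball (c0 i) \<delta>) \<longrightarrow>
      (\<exists>u. (\<forall>j<r. u j \<in> FF c0) \<and> LI scaleW r (\<lambda>j. f c (u j))))"
    using bchoice[OF loc] by (elim exE) (rule that)
  obtain dd where FF: "\<forall>c0\<in>K. finite (FF c0) \<and> dd c0 > 0 \<and> (\<forall>c. (\<forall>i\<in>{..<s}. c i \<in> ball (c0 i) (dd c0)) \<longrightarrow>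
      (\<exists>u. (\<forall>j<r. u j \<in> FF c0) \<and> LI scaleW r (\<lambda>j. f c (u j))))"
    using bchoice[OF FF1] by (elim exE) (rule that)
  define N where "N c0 = {c. \<forall>i\<in>{..<s}. c i \<in> ball (c0 i) (dd c0)}" for c0
  have opn: "open (N c0)" for c0
    using product_topology_basis'[of "{..<s}" "\<lambda>i. ball (c0 i) (dd c0)" "\<lambda>i. i"] by (simp add: N_def)
  have ddpos: "dd c0 > 0" and finFF: "finite (FF c0)"
    and good: "\<And>c. c \<in> N c0 \<Longrightarrow> \<exists>u. (\<forall>j<r. u j \<in> FF c0) \<and> LI scaleW r (\<lambda>j. f c (u j))"
    if "c0 \<in> K" for c0
    using bspec[OF FF that] unfolding N_def by blast+
  have cov: "K \<subseteq> (\<Union>c0\<in>K. N c0)"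
  proof
    fix c0 assume "c0 \<in> K"
    moreover have "c0 \<in> N c0" using ddpos[OF \<open>c0 \<in> K\<close>] by (simp add: N_def)
    ultimately show "c0 \<in> (\<Union>c0\<in>K. N c0)" by blast
  qed
  obtain C' where C': "C' \<subseteq> K" "finite C'" "K \<subseteq> (\<Union>c0\<in>C'. N c0)"
    using compactE_image[OF cK opn cov] by blast
  define Fall where "Fall = \<Union>(FF ` C')"
  have finF: "finite Fall" unfolding Fall_def using C'(1,2) finFF by blast
  show ?thesis
  proof (rule exI[of _ "V.span Fall"], intro conjI)
    show "V.subspace (V.span Fall)" by (rule V.subspace_span)
    show "\<exists>B. finite B \<and> V.span B = V.span Fall" using finF by (intro exI[of _ Fall]) simp
    show "enat r \<le> tuple_rank scaleW s M (V.span Fall)"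
      unfolding tuple_rank_def le_INF_iff
    proof (rule ballI)
      fix c :: "nat \<Rightarrow> complex" assume "c \<in> {c. \<exists>i<s. c i \<noteq> 0}"
      then obtain i0 where i0: "i0 < s" "c i0 \<noteq> 0" by auto
      define n where "n = (\<Sum>i<s. cmod (c i))"
      have cn: "cmod (c i) \<le> n" if "i < s" for i
        unfolding n_def by (rule member_le_sum) (use that in auto)
      have npos: "n > 0" using cn[OF i0(1)] i0(2) by (meson less_le_trans zero_less_norm_iff)
      define c' where "c' = (\<lambda>i. if i < s then c i / of_real n else 0)"
      have "c' \<in> Box" unfolding Box_def c'_def
        using cn npos by (auto simp: PiE_iff norm_divide)
      moreover have "(\<Sum>i<s. cmod (c' i)) = 1"
      proof -
        have "(\<Sum>i<s. cmod (c' i)) = (\<Sum>i<s. cmod (c i) / n)"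
          by (rule sum.cong) (use npos in \<open>auto simp: c'_def norm_divide\<close>)
        also have "\<dots> = 1" using npos by (simp add: sum_divide_distrib[symmetric] n_def)
        finally show ?thesis .
      qed
      ultimately have "c' \<in> K" by (simp add: K_def)
      then obtain t where t: "t \<in> C'" "c' \<in> N t" using C' by auto
      then obtain u where u: "\<forall>j<r. u j \<in> FF t" "LI scaleW r (\<lambda>j. f c' (u j))"
        using good[of t c'] C'(1) by blast
      have fc: "f c x = scaleW (of_real n) (f c' x)" for x
      proof -
        have "scaleW (of_real n) (f c' x) = (\<Sum>i<s. scaleW (of_real n * c' i) (M i x))"
          by (simp add: f_def W.scale_sum_right)
        also have "\<dots> = f c x" unfolding f_def
          by (rule sum.cong) (use npos in \<open>auto simp: c'_def\<close>)
        finally show ?thesis by simp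
      qed
      have "LI scaleW r (\<lambda>j. scaleW (of_real n) (f c' (u j)))"
        by (rule LI_scale[OF assms(2) _ u(2)]) (use npos in simp)
      then have li: "LI scaleW r (\<lambda>j. f c (u j))" by (simp add: fc)
      have uS: "\<forall>j<r. u j \<in> V.span Fall"
        using u(1) t(1) by (auto simp: Fall_def intro: V.span_base)
      have "enat r \<le> vs_dim scaleW (f c ` V.span Fall)" by (rule LI_rank[OF assms(2) uS li])
      then show "enat r \<le> map_rank scaleW (\<lambda>x. \<Sum>i<s. scaleW (c i) (M i x)) (V.span Fall)"
        by (simp add: map_rank_def f_def)
    qed
  qed
qed

end
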